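(* Let $p_1,p_2\in(0,1]$, $c_1,c_2\ge0$, $\beta<1$, $\delta_1,\delta_2\in(0,1)$. Define $R=\frac12$, $T_i=p_i+(1-p_i)\frac12-c_i$ for $i=1,2$, $S_1=(1-p_2)\frac12$, $S_2=(1-p_1)\frac12$, $Q_1=p_1p_2\frac12\beta+p_1(1-p_2)+(1-p_1)(1-p_2)\frac12-c_1$, $Q_2=p_1p_2\frac12\beta+p_2(1-p_1)+(1-p_1)(1-p_2)\frac12-c_2$. (Grim Trigger) $\frac{R}{1-\delta_i}\ge T_i+\frac{\delta_iQ_i}{1-\delta_i}$ for both $i=1,2$ if and only if \[\delta_1\ge\frac{p_1-2c_1}{(1-\beta)p_1p_2+p_2}\quad\text{and}\quad\delta_2\ge\frac{p_2-2c_2}{(1-\beta)p_1p_2+p_1}.\] (Tit-for-Tat) $\frac{R}{1-\delta_i}\ge T_i+\delta_iS_i+\frac{\delta_i^2}{1-\delta_i}R$ for both $i=1,2$ if and only if \[\delta_1\ge\frac{p_1-2c_1}{p_2}\quad\text{and}\quad\delta_2\ge\frac{p_2-2c_2}{p_1}.\]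
   Context: Model: two content providers in an infinitely repeated game choose each period to cooperate or attack (ranking manipulation). Player $i$'s attack succeeds with probability $p_i$ and costs $c_i$; $\beta$ is the market degradation factor when both attacks succeed; $\delta_i$ is player $i$'s discount factor. $R,T_i,S_i,Q_i$ are player $i$'s stage payoffs for mutual cooperation, lone attack, being attacked while cooperating, and mutual attack. Cooperation is sustainable when each player weakly prefers perpetual cooperation to deviating under the trigger strategy (grim trigger: permanent mutual defection after a deviation; Tit-for-Tat: one round of retaliation then cooperation). *)

theory Defs
  imports Complex_Main
begin

definition R_pay :: real where "R_pay = 1/2"

definition T1 :: "real \<Rightarrow> real \<Rightarrow> real" where
  "T1 p1 c1 = p1 + (1 - p1) * (1/2) - c1"
definition T2 :: "real \<Rightarrow> real \<Rightarrow> real" where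
  "T2 p2 c2 = p2 + (1 - p2) * (1/2) - c2"
definition S1 :: "real \<Rightarrow> real" where
  "S1 p2 = (1 - p2) * (1/2)"
definition S2 :: "real \<Rightarrow> real" where
  "S2 p1 = (1 - p1) * (1/2)"
definition Q1 :: "real \<Rightarrow> real \<Rightarrow> real \<Rightarrow> real \<Rightarrow> real" where
  "Q1 p1 p2 \<beta> c1 = p1 * p2 * (1/2) * \<beta> + p1 * (1 - p2) + (1 - p1) * (1 - p2) * (1/2) - c1"
definition Q2 :: "real \<Rightarrow> real \<Rightarrow> real \<Rightarrow> real \<Rightarrow> real" where
  "Q2 p1 p2 \<beta> c2 = p1 * p2 * (1/2) * \<beta> + p2 * (1 - p1) + (1 - p1) * (1 - p2) * (1/2) - c2"

end

theory Submission
  imports Defs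
begin

lemma aux3:
  fixes x r a k :: real
  shows "x = r + (a - k) / 2 \<Longrightarrow> (x \<le> r) = (a \<le> k)"
  by (auto simp: field_simps)

lemma aux4:
  fixes x r a k d :: real
  shows "d < 1 \<Longrightarrow> x = r + (1 - d) * (a - k) / 2 \<Longrightarrow> (x \<le> r) = (a \<le> k)"
proof -
  assume d: "d < 1" and x: "x = r + (1 - d) * (a - k) / 2"
  have "(x \<le> r) = ((1 - d) * (a - k) \<le> 0)" using x by auto
  also have "\<dots> = (a \<le> k)" using d by (simp add: mult_le_0_iff)
  finally show ?thesis .
qed

lemma aux1:
  fixes a b c d :: real assumes "d < 1"
  shows "(a / (1 - d) \<ge> b + d * c / (1 - d)) \<longleftrightarrow> a \<ge> (1-d) * b + d * c"
proof -
  have p: "1 - d > 0" using assms by simp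
  have "b + d * c / (1 - d) = ((1-d) * b + d * c) / (1 - d)" using p by (simp add: field_simps)
  thus ?thesis using p by (simp add: divide_le_cancel)
qed

lemma aux2:
  fixes a b e d :: real assumes "d < 1"
  shows "(a / (1 - d) \<ge> b + d^2 / (1 - d) * e) \<longleftrightarrow> a \<ge> (1-d) * b + d^2 * e"
proof -
  have p: "1 - d > 0" using assms by simp
  have "b + d^2 / (1 - d) * e = ((1-d) * b + d^2 * e) / (1 - d)" using p by (simp add: field_simps)
  thus ?thesis using p by (simp add: divide_le_cancel)
qed

lemma g1:
  fixes p1 p2 c1 \<beta> d :: real
  assumes "0 < p1" "0 < p2" "\<beta> < 1" "0 < d" "d < 1"
  shows "(R_pay / (1 - d) \<ge> T1 p1 c1 + d * Q1 p1 p2 \<beta> c1 / (1 - d)) \<longleftrightarrow>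
         d \<ge> (p1 - 2 * c1) / ((1 - \<beta>) * p1 * p2 + p2)"
proof -
  have dp: "(1 - \<beta>) * p1 * p2 + p2 > 0" using assms by (simp add: add_pos_pos)
  have "(R_pay / (1 - d) \<ge> T1 p1 c1 + d * Q1 p1 p2 \<beta> c1 / (1 - d)) \<longleftrightarrow>
        R_pay \<ge> (1-d) * T1 p1 c1 + d * Q1 p1 p2 \<beta> c1"
    using aux1 assms by simp
  also have "\<dots> \<longleftrightarrow> d * ((1 - \<beta>) * p1 * p2 + p2) \<ge> p1 - 2 * c1"
  proof -
    have "(1-d) * T1 p1 c1 + d * Q1 p1 p2 \<beta> c1 = R_pay + ((p1 - 2 * c1) - d * ((1 - \<beta>) * p1 * p2 + p2)) / 2"
      by (simp add: R_pay_def T1_def Q1_def field_simps)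
    thus ?thesis by (rule aux3)
  qed
  also have "\<dots> \<longleftrightarrow> d \<ge> (p1 - 2 * c1) / ((1 - \<beta>) * p1 * p2 + p2)"
    using dp by (simp add: pos_divide_le_eq)
  finally show ?thesis .
qed

lemma g2:
  fixes p1 p2 c2 \<beta> d :: real
  assumes "0 < p1" "0 < p2" "\<beta> < 1" "0 < d" "d < 1"
  shows "(R_pay / (1 - d) \<ge> T2 p2 c2 + d * Q2 p1 p2 \<beta> c2 / (1 - d)) \<longleftrightarrow>
         d \<ge> (p2 - 2 * c2) / ((1 - \<beta>) * p1 * p2 + p1)"
proof -
  have dp: "(1 - \<beta>) * p1 * p2 + p1 > 0" using assms by (simp add: add_pos_pos)
  have "(R_pay / (1 - d) \<ge> T2 p2 c2 + d * Q2 p1 p2 \<beta> c2 / (1 - d)) \<longleftrightarrow>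
        R_pay \<ge> (1-d) * T2 p2 c2 + d * Q2 p1 p2 \<beta> c2"
    using aux1 assms by simp
  also have "\<dots> \<longleftrightarrow> d * ((1 - \<beta>) * p1 * p2 + p1) \<ge> p2 - 2 * c2"
  proof -
    have "(1-d) * T2 p2 c2 + d * Q2 p1 p2 \<beta> c2 = R_pay + ((p2 - 2 * c2) - d * ((1 - \<beta>) * p1 * p2 + p1)) / 2"
      by (simp add: R_pay_def T2_def Q2_def field_simps)
    thus ?thesis by (rule aux3)
  qed
  also have "\<dots> \<longleftrightarrow> d \<ge> (p2 - 2 * c2) / ((1 - \<beta>) * p1 * p2 + p1)"
    using dp by (simp add: pos_divide_le_eq)
  finally show ?thesis .
qed

lemma t1:
  fixes p1 p2 c1 d :: real
  assumes "0 < p2" "0 < d" "d < 1"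
  shows "(R_pay / (1 - d) \<ge> T1 p1 c1 + d * S1 p2 + d^2 / (1 - d) * R_pay) \<longleftrightarrow>
         d \<ge> (p1 - 2 * c1) / p2"
proof -
  have "(R_pay / (1 - d) \<ge> T1 p1 c1 + d * S1 p2 + d^2 / (1 - d) * R_pay) \<longleftrightarrow>
        R_pay \<ge> (1-d) * (T1 p1 c1 + d * S1 p2) + d^2 * R_pay"
    using aux2[where a=R_pay and b="T1 p1 c1 + d * S1 p2" and e=R_pay and d=d] assms by (simp only:)
  also have "\<dots> \<longleftrightarrow> d * p2 \<ge> p1 - 2 * c1"
  proof -
    have "(1-d) * (T1 p1 c1 + d * S1 p2) + d^2 * R_pay = R_pay + (1 - d) * ((p1 - 2 * c1) - d * p2) / 2"
      by (simp add: R_pay_def T1_def S1_def field_simps power2_eq_square)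
    thus ?thesis by (rule aux4[OF assms(3)])
  qed
  also have "\<dots> \<longleftrightarrow> d \<ge> (p1 - 2 * c1) / p2"
    using assms by (simp add: pos_divide_le_eq)
  finally show ?thesis .
qed

lemma t2:
  fixes p1 p2 c2 d :: real
  assumes "0 < p1" "0 < d" "d < 1"
  shows "(R_pay / (1 - d) \<ge> T2 p2 c2 + d * S2 p1 + d^2 / (1 - d) * R_pay) \<longleftrightarrow>
         d \<ge> (p2 - 2 * c2) / p1"
proof -
  have "(R_pay / (1 - d) \<ge> T2 p2 c2 + d * S2 p1 + d^2 / (1 - d) * R_pay) \<longleftrightarrow>
        R_pay \<ge> (1-d) * (T2 p2 c2 + d * S2 p1) + d^2 * R_pay"
    using aux2[where a=R_pay and b="T2 p2 c2 + d * S2 p1" and e=R_pay and d=d] assms by (simp only:)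
  also have "\<dots> \<longleftrightarrow> d * p1 \<ge> p2 - 2 * c2"
  proof -
    have "(1-d) * (T2 p2 c2 + d * S2 p1) + d^2 * R_pay = R_pay + (1 - d) * ((p2 - 2 * c2) - d * p1) / 2"
      by (simp add: R_pay_def T2_def S2_def field_simps power2_eq_square)
    thus ?thesis by (rule aux4[OF assms(3)])
  qed
  also have "\<dots> \<longleftrightarrow> d \<ge> (p2 - 2 * c2) / p1"
    using assms by (simp add: pos_divide_le_eq)
  finally show ?thesis .
qed

theorem theorem10:
  fixes p1 p2 c1 c2 \<beta> \<delta>1 \<delta>2 :: real
  assumes "0 < p1" "p1 \<le> 1" "0 < p2" "p2 \<le> 1"
    and "c1 \<ge> 0" "c2 \<ge> 0" "\<beta> < 1"
    and "0 < \<delta>1" "\<delta>1 < 1" "0 < \<delta>2" "\<delta>2 < 1"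
  shows "((R_pay / (1 - \<delta>1) \<ge> T1 p1 c1 + \<delta>1 * Q1 p1 p2 \<beta> c1 / (1 - \<delta>1) \<and>
           R_pay / (1 - \<delta>2) \<ge> T2 p2 c2 + \<delta>2 * Q2 p1 p2 \<beta> c2 / (1 - \<delta>2))
          \<longleftrightarrow>
          (\<delta>1 \<ge> (p1 - 2 * c1) / ((1 - \<beta>) * p1 * p2 + p2) \<and>
           \<delta>2 \<ge> (p2 - 2 * c2) / ((1 - \<beta>) * p1 * p2 + p1)))
      \<and>
         ((R_pay / (1 - \<delta>1) \<ge> T1 p1 c1 + \<delta>1 * S1 p2 + \<delta>1^2 / (1 - \<delta>1) * R_pay \<and>
           R_pay / (1 - \<delta>2) \<ge> T2 p2 c2 + \<delta>2 * S2 p1 + \<delta>2^2 / (1 - \<delta>2) * R_pay)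
          \<longleftrightarrow>
          (\<delta>1 \<ge> (p1 - 2 * c1) / p2 \<and> \<delta>2 \<ge> (p2 - 2 * c2) / p1))"
  using g1[OF assms(1,3,7,8,9)] g2[OF assms(1,3,7,10,11)] t1[OF assms(3,8,9)] t2[OF assms(1,10,11)] by blast

end
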